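(* Let $k$ be a field of characteristic $0$, $R=k[x_1,\dots,x_n]$ acting on $S=k[X_1,\dots,X_n]$ by differentiation, and let $\ell\in R_1$. Let $F\in S$ be a homogeneous form such that $R/\operatorname{Ann}(F)$ has the strong Lefschetz property with $\ell$ as a strong Lefschetz element. Then for every $d>0$, the Artinian Gorenstein algebra $R/\operatorname{Ann}(\ell^d\circ F)$ has the strong Lefschetz property.
   Context: $R$ acts on $S$ by $x_i\circ F=\partial F/\partial X_i$, and $\operatorname{Ann}(F)=\{g\in R\mid g\circ F=0\}$. A graded Artinian $k$-algebra $A$ has the strong Lefschetz property, with strong Lefschetz element $\ell\in A_1$, if for all $i$ and $j\ge0$ the multiplication map $\cdot\ell^j\colon A_i\to A_{i+j}$ is injective or surjective. *)

theory Defs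
  imports Main "HOL-Library.Poly_Mapping"
begin

text \<open>Both R = k[x_v] and S = k[X_v] are
  modelled by this type.\<close>

type_synonym ('v, 'a) mpoly = "('v \<Rightarrow>\<^sub>0 nat) \<Rightarrow>\<^sub>0 'a"

definition mdeg :: "('v::finite \<Rightarrow>\<^sub>0 nat) \<Rightarrow> nat" where
  "mdeg m = (\<Sum>i\<in>UNIV. Poly_Mapping.lookup m i)"

text \<open>p is a homogeneous form of degree d (the zero polynomial counts as
  homogeneous of every degree, so R_d = {p. homog d p}).\<close>
definition homog :: "nat \<Rightarrow> ('v::finite, 'a::zero) mpoly \<Rightarrow> bool" where
  "homog d p \<longleftrightarrow> (\<forall>m\<in>Poly_Mapping.keys p. mdeg m = d)"

definition pderiv_mp :: "'v \<Rightarrow> ('v, 'a::comm_ring_1) mpoly \<Rightarrow> ('v, 'a) mpoly" where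
  "pderiv_mp i F = (\<Sum>m\<in>Poly_Mapping.keys F.
      Poly_Mapping.single (m - Poly_Mapping.single i 1) (of_nat (Poly_Mapping.lookup m i) * Poly_Mapping.lookup F m))"

text \<open>The monomial x^m acts as the differential operator
  prod_i (d/dX_i)^(m_i).\<close>
definition diff_mono :: "('v::{finite,linorder} \<Rightarrow>\<^sub>0 nat) \<Rightarrow> ('v, 'a::comm_ring_1) mpoly \<Rightarrow> ('v, 'a) mpoly" where
  "diff_mono m = foldr (\<lambda>i f. (pderiv_mp i ^^ Poly_Mapping.lookup m i) \<circ> f) (sorted_list_of_set UNIV) id"

definition act :: "('v::{finite,linorder}, 'a::comm_ring_1) mpoly \<Rightarrow> ('v, 'a) mpoly \<Rightarrow> ('v, 'a) mpoly" where
  "act g F = (\<Sum>m\<in>Poly_Mapping.keys g. Poly_Mapping.single 0 (Poly_Mapping.lookup g m) * diff_mono m F)"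

definition Ann :: "('v::{finite,linorder}, 'a::comm_ring_1) mpoly \<Rightarrow> ('v, 'a) mpoly set" where
  "Ann F = {g. act g F = 0}"

text \<open>l (a linear form in R_1, representing its class in A_1) is a strong Lefschetz
  element of the graded Artinian algebra A = R/Ann(F), where A_i = R_i/Ann(F)_i
  (Ann(F) is a homogeneous ideal): for all i, j, multiplication by l^j from A_i to
  A_(i+j) is injective or surjective.\<close>
definition strong_lefschetz_elem :: "('v::{finite,linorder}, 'a::comm_ring_1) mpoly \<Rightarrow> ('v, 'a) mpoly \<Rightarrow> bool" where
  "strong_lefschetz_elem F l \<longleftrightarrow> homog 1 l \<and>
     (\<forall>i j::nat.
        (\<forall>g. homog i g \<and> l ^ j * g \<in> Ann F \<longrightarrow> g \<in> Ann F)
      \<or> (\<forall>h. homog (i + j) h \<longrightarrow> (\<exists>g. homog i g \<and> h - l ^ j * g \<in> Ann F)))"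

definition has_SLP :: "('v::{finite,linorder}, 'a::comm_ring_1) mpoly \<Rightarrow> bool" where
  "has_SLP F \<longleftrightarrow> (\<exists>l. strong_lefschetz_elem F l)"

end

theory Submission
  imports Defs
begin

lemma lookup_smult: "Poly_Mapping.lookup (Poly_Mapping.single 0 c * p) n = c * Poly_Mapping.lookup p n"
  by (simp add: mult_map_scale_conv_mult[symmetric] map.rep_eq when_def)

lemma lookup_pderiv:
  fixes F :: "('v, 'a::comm_ring_1) mpoly"
  shows "Poly_Mapping.lookup (pderiv_mp i F) n
    = of_nat (Poly_Mapping.lookup n i + 1) * Poly_Mapping.lookup F (n + Poly_Mapping.single i 1)"
proof -
  let ?e = "Poly_Mapping.single i (1::nat)"
  have "Poly_Mapping.lookup (pderiv_mp i F) n
     = (\<Sum>m\<in>Poly_Mapping.keys F. (of_nat (Poly_Mapping.lookup m i) * Poly_Mapping.lookup F m) when m - ?e = n)"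
    unfolding pderiv_mp_def lookup_sum lookup_single by simp
  also have "\<dots> = (\<Sum>m\<in>Poly_Mapping.keys F. (of_nat (Poly_Mapping.lookup m i) * Poly_Mapping.lookup F m) when m = n + ?e)"
  proof (rule sum.cong[OF refl])
    fix m :: "'v \<Rightarrow>\<^sub>0 nat"
    show "(of_nat (Poly_Mapping.lookup m i) * Poly_Mapping.lookup F m when m - ?e = n)
        = (of_nat (Poly_Mapping.lookup m i) * Poly_Mapping.lookup F m when m = n + ?e)"
    proof (cases "Poly_Mapping.lookup m i = 0")
      case True
      then have "m \<noteq> n + ?e" by (auto simp: lookup_add)
      then show ?thesis using True by (simp add: when_def)
    next
      case False
      have "(m - ?e = n) = (m = n + ?e)"
      proof
        assume "m - ?e = n"
        note h = this
        show "m = n + ?e"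
        proof (rule poly_mapping_eqI)
          fix x
          have "Poly_Mapping.lookup (m - ?e) x = Poly_Mapping.lookup n x" using h by simp
          then show "Poly_Mapping.lookup m x = Poly_Mapping.lookup (n + ?e) x" using False
            by (cases "x = i") (auto simp: lookup_add lookup_minus lookup_single when_def)
        qed
      next
        assume "m = n + ?e"
        then show "m - ?e = n"
          by (auto simp: poly_mapping_eq_iff fun_eq_iff lookup_add lookup_minus lookup_single when_def)
      qed
      then show ?thesis by simp
    qed
  qed
  also have "\<dots> = of_nat (Poly_Mapping.lookup n i + 1) * Poly_Mapping.lookup F (n + ?e)"
    by (cases "n + ?e \<in> Poly_Mapping.keys F")
       (auto simp: when_def lookup_add in_keys_iff)
  finally show ?thesis .
qed

lemma lookup_pderiv_pow:
  fixes F :: "('v, 'a::comm_ring_1) mpoly"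
  shows "Poly_Mapping.lookup ((pderiv_mp i ^^ k) F) n
    = pochhammer (of_nat (Poly_Mapping.lookup n i + 1)) k * Poly_Mapping.lookup F (n + Poly_Mapping.single i k)"
proof (induction k arbitrary: n)
  case 0
  then show ?case by simp
next
  case (Suc k)
  have "Poly_Mapping.lookup ((pderiv_mp i ^^ Suc k) F) n
     = of_nat (Poly_Mapping.lookup n i + 1) * Poly_Mapping.lookup ((pderiv_mp i ^^ k) F) (n + Poly_Mapping.single i 1)"
    by (simp add: lookup_pderiv)
  also have "\<dots> = of_nat (Poly_Mapping.lookup n i + 1) * (pochhammer (of_nat (Poly_Mapping.lookup n i + 1) + 1) k
        * Poly_Mapping.lookup F (n + Poly_Mapping.single i (Suc k)))"
    by (simp add: Suc.IH lookup_add add.assoc single_add[symmetric] add_ac)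
  also have "\<dots> = pochhammer (of_nat (Poly_Mapping.lookup n i + 1)) (Suc k) * Poly_Mapping.lookup F (n + Poly_Mapping.single i (Suc k))"
    by (simp add: pochhammer_rec mult.assoc)
  finally show ?case .
qed

lemma lookup_foldr:
  fixes F :: "('v, 'a::comm_ring_1) mpoly"
  assumes "distinct xs"
  shows "Poly_Mapping.lookup (foldr (\<lambda>i f. (pderiv_mp i ^^ Poly_Mapping.lookup m i) \<circ> f) xs id F) n
    = (\<Prod>i\<in>set xs. pochhammer (of_nat (Poly_Mapping.lookup n i + 1)) (Poly_Mapping.lookup m i))
      * Poly_Mapping.lookup F (n + (\<Sum>i\<in>set xs. Poly_Mapping.single i (Poly_Mapping.lookup m i)))"
  using assms
proof (induction xs arbitrary: n)
  case Nil
  then show ?case by simp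
next
  case (Cons x xs)
  let ?n = "n + Poly_Mapping.single x (Poly_Mapping.lookup m x)"
  have eq: "(\<Prod>i\<in>set xs. pochhammer (of_nat (Poly_Mapping.lookup ?n i + 1)) (Poly_Mapping.lookup m i))
      = (\<Prod>i\<in>set xs. pochhammer (of_nat (Poly_Mapping.lookup n i + 1)) (Poly_Mapping.lookup m i))"
    using Cons.prems by (intro prod.cong refl) (auto simp: lookup_add lookup_single when_def)
  have "Poly_Mapping.lookup (foldr (\<lambda>i f. (pderiv_mp i ^^ Poly_Mapping.lookup m i) \<circ> f) (x # xs) id F) n
    = pochhammer (of_nat (Poly_Mapping.lookup n x + 1)) (Poly_Mapping.lookup m x)
      * Poly_Mapping.lookup (foldr (\<lambda>i f. (pderiv_mp i ^^ Poly_Mapping.lookup m i) \<circ> f) xs id F) ?n"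
    by (simp add: lookup_pderiv_pow)
  also have "\<dots> = pochhammer (of_nat (Poly_Mapping.lookup n x + 1)) (Poly_Mapping.lookup m x)
      * ((\<Prod>i\<in>set xs. pochhammer (of_nat (Poly_Mapping.lookup n i + 1)) (Poly_Mapping.lookup m i))
      * Poly_Mapping.lookup F (?n + (\<Sum>i\<in>set xs. Poly_Mapping.single i (Poly_Mapping.lookup m i))))"
  proof -
    have "distinct xs" using Cons.prems by simp
    from Cons.IH[OF this, of ?n] show ?thesis by (simp only: eq)
  qed
  also have "\<dots> = (\<Prod>i\<in>set (x # xs). pochhammer (of_nat (Poly_Mapping.lookup n i + 1)) (Poly_Mapping.lookup m i))
      * Poly_Mapping.lookup F (n + (\<Sum>i\<in>set (x # xs). Poly_Mapping.single i (Poly_Mapping.lookup m i)))"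
    using Cons.prems by (simp add: add.assoc mult.assoc)
  finally show ?case .
qed

definition dcoef :: "('v::finite \<Rightarrow>\<^sub>0 nat) \<Rightarrow> ('v \<Rightarrow>\<^sub>0 nat) \<Rightarrow> 'a::comm_ring_1" where
  "dcoef m n = (\<Prod>i\<in>UNIV. pochhammer (of_nat (Poly_Mapping.lookup n i + 1)) (Poly_Mapping.lookup m i))"

lemma sum_single_UNIV:
  "(\<Sum>i\<in>(UNIV::'v::finite set). Poly_Mapping.single i (Poly_Mapping.lookup m i)) = m"
  by (rule poly_mapping_eqI) (simp add: lookup_sum lookup_single when_def)

lemma lookup_diff_mono:
  fixes F :: "('v::{finite,linorder}, 'a::comm_ring_1) mpoly"
  shows "Poly_Mapping.lookup (diff_mono m F) n = dcoef m n * Poly_Mapping.lookup F (n + m)"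
proof -
  have d: "distinct (sorted_list_of_set (UNIV::'v set))" by simp
  have s: "set (sorted_list_of_set (UNIV::'v set)) = UNIV" by simp
  show ?thesis
    unfolding diff_mono_def lookup_foldr[OF d] s sum_single_UNIV dcoef_def ..
qed

lemma dcoef_add:
  "(dcoef (m + m') n :: 'a::comm_ring_1) = dcoef m n * dcoef m' (n + m)"
  unfolding dcoef_def prod.distrib[symmetric]
  by (rule prod.cong[OF refl]) (simp add: lookup_add pochhammer_product' add_ac)

lemma diff_mono_add:
  fixes F :: "('v::{finite,linorder}, 'a::comm_ring_1) mpoly"
  shows "diff_mono (m + m') F = diff_mono m (diff_mono m' F)"
  by (rule poly_mapping_eqI) (simp add: lookup_diff_mono dcoef_add add_ac mult_ac)

lemma diff_mono_Fadd:
  fixes F :: "('v::{finite,linorder}, 'a::comm_ring_1) mpoly"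
  shows "diff_mono m (F + G) = diff_mono m F + diff_mono m G"
  by (rule poly_mapping_eqI) (simp add: lookup_diff_mono lookup_add distrib_left)

lemma diff_mono_Fsmult:
  fixes F :: "('v::{finite,linorder}, 'a::comm_ring_1) mpoly"
  shows "diff_mono m (Poly_Mapping.single 0 c * F) = Poly_Mapping.single 0 c * diff_mono m F"
  by (rule poly_mapping_eqI) (simp only: lookup_diff_mono lookup_smult mult.left_commute)

lemma diff_mono_F0:
  shows "diff_mono m (0 :: ('v::{finite,linorder}, 'a::comm_ring_1) mpoly) = 0"
  by (rule poly_mapping_eqI) (simp add: lookup_diff_mono)

lemma diff_mono_Fsum:
  fixes F :: "'b \<Rightarrow> ('v::{finite,linorder}, 'a::comm_ring_1) mpoly"
  shows "diff_mono m (\<Sum>x\<in>A. F x) = (\<Sum>x\<in>A. diff_mono m (F x))"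
  by (induction A rule: infinite_finite_induct) (simp_all add: diff_mono_F0 diff_mono_Fadd)

lemma act_superset:
  fixes F :: "('v::{finite,linorder}, 'a::comm_ring_1) mpoly"
  assumes "finite S" "Poly_Mapping.keys g \<subseteq> S"
  shows "act g F = (\<Sum>m\<in>S. Poly_Mapping.single 0 (Poly_Mapping.lookup g m) * diff_mono m F)"
  unfolding act_def
  by (rule sum.mono_neutral_left) (use assms in \<open>auto simp: in_keys_iff\<close>)

lemma act_add:
  fixes F :: "('v::{finite,linorder}, 'a::comm_ring_1) mpoly"
  shows "act (a + b) F = act a F + act b F"
proof -
  let ?S = "Poly_Mapping.keys a \<union> Poly_Mapping.keys b"
  have f: "finite ?S" by simp
  have "act (a + b) F = (\<Sum>m\<in>?S. Poly_Mapping.single 0 (Poly_Mapping.lookup (a+b) m) * diff_mono m F)"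
    by (rule act_superset[OF f]) (rule keys_add)
  also have "\<dots> = (\<Sum>m\<in>?S. Poly_Mapping.single 0 (Poly_Mapping.lookup a m) * diff_mono m F)
     + (\<Sum>m\<in>?S. Poly_Mapping.single 0 (Poly_Mapping.lookup b m) * diff_mono m F)"
    by (simp add: lookup_add single_add distrib_right sum.distrib)
  also have "\<dots> = act a F + act b F"
    by (simp add: act_superset[OF f, symmetric])
  finally show ?thesis .
qed

lemma act_zero: "act 0 (F :: ('v::{finite,linorder}, 'a::comm_ring_1) mpoly) = 0"
  by (simp add: act_def)

lemma act_sum:
  fixes F :: "('v::{finite,linorder}, 'a::comm_ring_1) mpoly"
  shows "act (\<Sum>x\<in>A. g x) F = (\<Sum>x\<in>A. act (g x) F)"
  by (induction A rule: infinite_finite_induct) (simp_all add: act_zero act_add)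

lemma act_single:
  fixes F :: "('v::{finite,linorder}, 'a::comm_ring_1) mpoly"
  shows "act (Poly_Mapping.single m c) F = Poly_Mapping.single 0 c * diff_mono m F"
  by (subst act_superset[of "{m}"]) auto

lemma act_F0: "act g (0 :: ('v::{finite,linorder}, 'a::comm_ring_1) mpoly) = 0"
  by (simp add: act_def diff_mono_F0)

lemma poly_expand: "(\<Sum>m\<in>Poly_Mapping.keys a. Poly_Mapping.single m (Poly_Mapping.lookup a m)) = a"
  by (rule poly_mapping_eqI) (simp add: lookup_sum lookup_single when_def in_keys_iff)

lemma act_single_mult:
  fixes F :: "('v::{finite,linorder}, 'a::comm_ring_1) mpoly"
  shows "act (Poly_Mapping.single m c * b) F = act (Poly_Mapping.single m c) (act b F)"
proof -
  have "act (Poly_Mapping.single m c * b) F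
     = act (\<Sum>m'\<in>Poly_Mapping.keys b. Poly_Mapping.single (m + m') (c * Poly_Mapping.lookup b m')) F"
    by (subst (1) poly_expand[of b, symmetric]) (simp add: sum_distrib_left mult_single)
  also have "\<dots> = (\<Sum>m'\<in>Poly_Mapping.keys b. Poly_Mapping.single 0 c * (Poly_Mapping.single 0 (Poly_Mapping.lookup b m')
       * diff_mono m (diff_mono m' F)))"
  proof -
    have "act (Poly_Mapping.single (m + m') (c * Poly_Mapping.lookup b m')) F
      = Poly_Mapping.single 0 c * (Poly_Mapping.single 0 (Poly_Mapping.lookup b m') * diff_mono m (diff_mono m' F))" for m'
    proof -
      have "Poly_Mapping.single 0 (c * Poly_Mapping.lookup b m') = Poly_Mapping.single 0 c * Poly_Mapping.single (0::'v \<Rightarrow>\<^sub>0 nat) (Poly_Mapping.lookup b m')"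
        by (simp add: mult_single)
      then show ?thesis by (simp add: act_single diff_mono_add mult.assoc)
    qed
    then show ?thesis by (simp add: act_sum)
  qed
  also have "\<dots> = act (Poly_Mapping.single m c) (act b F)"
    by (simp add: act_single act_def[of b] diff_mono_Fsum diff_mono_Fsmult sum_distrib_left)
  finally show ?thesis .
qed

lemma act_mult:
  fixes F :: "('v::{finite,linorder}, 'a::comm_ring_1) mpoly"
  shows "act (a * b) F = act a (act b F)"
proof -
  have "act (a * b) F = act (\<Sum>m\<in>Poly_Mapping.keys a. Poly_Mapping.single m (Poly_Mapping.lookup a m) * b) F"
    by (subst (1) poly_expand[of a, symmetric]) (simp add: sum_distrib_right)
  also have "\<dots> = (\<Sum>m\<in>Poly_Mapping.keys a. act (Poly_Mapping.single m (Poly_Mapping.lookup a m)) (act b F))"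
    by (simp add: act_sum act_single_mult)
  also have "\<dots> = act a (act b F)"
    by (simp add: act_single act_def[of a])
  finally show ?thesis .
qed

lemma mdeg_add: "mdeg (x + y) = mdeg x + mdeg y"
  by (simp add: mdeg_def lookup_add sum.distrib)

lemma homog_mult:
  fixes p q :: "('v::finite, 'a::comm_ring_1) mpoly"
  assumes "homog a p" "homog b q"
  shows "homog (a + b) (p * q)"
  unfolding homog_def
proof
  fix m assume "m \<in> Poly_Mapping.keys (p * q)"
  then obtain x y where "m = x + y" "x \<in> Poly_Mapping.keys p" "y \<in> Poly_Mapping.keys q"
    using keys_mult by blast
  then show "mdeg m = a + b" using assms by (simp add: homog_def mdeg_add)
qed

lemma homog_one: "homog 0 (1 :: ('v::finite, 'a::comm_ring_1) mpoly)"
  by (simp add: homog_def mdeg_def)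

lemma homog_pow:
  fixes l :: "('v::finite, 'a::comm_ring_1) mpoly"
  assumes "homog 1 l"
  shows "homog k (l ^ k)"
proof (induction k)
  case 0
  then show ?case by (simp add: homog_one)
next
  case (Suc k)
  then show ?case using homog_mult[OF assms Suc] by simp
qed

theorem mainTheorem16:
  fixes F l :: "('v::{finite,linorder}, 'a::field_char_0) mpoly"
    and e d :: nat
  assumes "homog e F"
    and "homog 1 l"
    and "strong_lefschetz_elem F l"
    and "d > 0"
  shows "has_SLP (act (l ^ d) F)"
  unfolding has_SLP_def
proof (intro exI)
  let ?G = "act (l ^ d) F"
  show "strong_lefschetz_elem ?G l"
    unfolding strong_lefschetz_elem_def
  proof (intro conjI allI)
    show "homog 1 l" by fact
  next
    fix i j :: nat
    from assms(3) have
      "(\<forall>g. homog i g \<and> l ^ (j + d) * g \<in> Ann F \<longrightarrow> g \<in> Ann F)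
      \<or> (\<forall>h. homog (i + (j + d)) h \<longrightarrow> (\<exists>g. homog i g \<and> h - l ^ (j + d) * g \<in> Ann F))"
      unfolding strong_lefschetz_elem_def by blast
    then show "(\<forall>g. homog i g \<and> l ^ j * g \<in> Ann ?G \<longrightarrow> g \<in> Ann ?G)
      \<or> (\<forall>h. homog (i + j) h \<longrightarrow> (\<exists>g. homog i g \<and> h - l ^ j * g \<in> Ann ?G))"
    proof
      assume inj: "\<forall>g. homog i g \<and> l ^ (j + d) * g \<in> Ann F \<longrightarrow> g \<in> Ann F"
      show ?thesis
      proof (rule disjI1, intro allI impI)
        fix g :: "('v, 'a) mpoly" assume h: "homog i g \<and> l ^ j * g \<in> Ann ?G"
        then have "act (l ^ j * g * l ^ d) F = 0" by (simp add: Ann_def act_mult)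
        moreover have "l ^ j * g * l ^ d = l ^ (j + d) * g" by (simp add: power_add mult_ac)
        ultimately have "l ^ (j + d) * g \<in> Ann F" by (simp add: Ann_def)
        with inj h have "act g F = 0" by (simp add: Ann_def)
        then have "act (l ^ d * g) F = 0" by (simp add: act_mult act_F0)
        then show "g \<in> Ann ?G" by (simp add: Ann_def act_mult[symmetric] mult.commute)
      qed
    next
      assume surj: "\<forall>h. homog (i + (j + d)) h \<longrightarrow> (\<exists>g. homog i g \<and> h - l ^ (j + d) * g \<in> Ann F)"
      show ?thesis
      proof (rule disjI2, intro allI impI)
        fix h :: "('v, 'a) mpoly" assume hh: "homog (i + j) h"
        have "homog (d + (i + j)) (l ^ d * h)" by (rule homog_mult[OF homog_pow[OF assms(2)] hh])
        then have "homog (i + (j + d)) (l ^ d * h)" by (simp add: add_ac)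
        with surj obtain g where g: "homog i g" "l ^ d * h - l ^ (j + d) * g \<in> Ann F" by blast
        have "(h - l ^ j * g) * l ^ d = l ^ d * h - l ^ (j + d) * g"
          by (simp add: power_add algebra_simps)
        with g(2) have "act ((h - l ^ j * g) * l ^ d) F = 0" by (simp add: Ann_def)
        then have "h - l ^ j * g \<in> Ann ?G" by (simp add: Ann_def act_mult)
        with g(1) show "\<exists>g. homog i g \<and> h - l ^ j * g \<in> Ann ?G" by blast
      qed
    qed
  qed
qed

end
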